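(* (a) $\mathbf{Ck}$-tableaux and $\mathbf{CK}$-tableaux are sound for Segerberg models: if a finite set of formulas $\{\theta_1,\dots,\theta_n\}$ is satisfiable in some Segerberg model, then no $\mathbf{Ck}$- or $\mathbf{CK}$-tableau with assumptions $1:\theta_1,\dots,1:\theta_n$ is closed. (b) $\mathbf{Vc}$-tableaux are sound for $\mathbf{VC}$-models: if $\{\theta_1,\dots,\theta_n\}$ is satisfiable in some $\mathbf{VC}$-model, then no $\mathbf{Vc}$-tableau with assumptions $1:\theta_1,\dots,1:\theta_n$ is closed.
   Context: Formulas: built from propositional variables and the constant $\bot$ using $\lnot$, the binary connectives $\supset,\land,\lor$, and two binary conditional operators $[\phi]\psi$ and $\langle\phi\rangle\psi$ (treated as primitive by tableau rules). $\top$ abbreviates $\lnot\bot$. Segerberg model: $M=\langle U,P,R,V\rangle$ with $U\neq\emptyset$, $P\subseteq\wp(U)$, $R:P\to\wp(U\times U)$, $V:\mathrm{Var}\to P$, such that $\emptyset,U\in P$; $P$ is closed under complement, binary intersection and union; and for $S,T\in P$, $\{x\in U\mid R_S(x)\subseteq T\}\in P$, where $R_S=R(S)$ and $R_S(x)=\{y\mid (x,y)\in R_S\}$. Truth: $M,x\not\models\bot$; $M,x\models p$ iff $x\in V(p)$; Boolean connectives as usual; $M,x\models[\phi]\psi$ iff $M,y\models\psi$ for all $y\in R_\phi(x)$; $M,x\models\langle\phi\rangle\psi$ iff $M,y\models\psi$ for some $y\in R_\phi(x)$; here $\|\phi\|=\{x\mid M,x\models\phi\}$ and $R_\phi=R_{\|\phi\|}$.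 A set of formulas is satisfiable in $M$ if all its members are true at a common world. A $\mathbf{VC}$-model is a Segerberg model such that for all $S,T\in P$ and $x\in U$: (1) $R_S(x)\subseteq S$; (2) $R_S(x)\cap T\neq\emptyset\Rightarrow R_T(x)\neq\emptyset$; (3) $R_U(x)\subseteq\{x\}$; (4) $x\in R_U(x)$; (5) $R_S(x)\cap T\subseteq R_{S\cap T}(x)$; (6) $R_S(x)\cap T\neq\emptyset\Rightarrow R_{S\cap T}(x)\subseteq R_S(x)\cap T$. Tableaux: indices are positive integers. Prefixed formulas are $i:\phi$ and $i\,r_\phi\,j$. A tableau with assumptions $A$ (a set of prefixed formulas) is a finite downward-branching tree labelled by prefixed formulas, each either in $A$ or obtained by applying a branch extension rule to prefixed formulas on its branch; non-branching rules append their conclusions, branching rules split the branch into one child per alternative, each alternative appending its listed conclusions. A branch is closed if it contains $i:\chi$ and $i:\lnot\chi$, or $i:\bot$; a tableau is closed if all branches are closed. Basic rules: from $i:\phi\land\psi$ add $i:\phi,i:\psi$; from $i:\lnot(\phi\land\psi)$ branch $i:\lnot\phi\mid i:\lnot\psi$; from $i:\phi\lor\psi$ branch $i:\phi\mid i:\psi$; from $i:\lnot(\phi\lor\psi)$ add $i:\lnot\phi,i:\lnot\psi$; from $i:\phi\supset\psi$ branch $i:\lnot\phi\mid i:\psi$; from $i:\lnot(\phi\supset\psi)$ add $i:\phi,i:\lnot\psi$; from $i:\lnot\lnot\phi$ add $i:\phi$; ($\Box$) from $i:[\phi]\psi$ and $i\,r_\phi\,j$ add $j:\psi$; ($\lnot\Box$)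 from $i:\lnot[\phi]\psi$ add $i\,r_\phi\,j$ and $j:\lnot\psi$, $j$ new; ($\Diamond$) from $i:\langle\phi\rangle\psi$ add $i\,r_\phi\,j$ and $j:\psi$, $j$ new; ($\lnot\Diamond$) from $i:\lnot\langle\phi\rangle\psi$ and $i\,r_\phi\,j$ add $j:\lnot\psi$. (cut) for any index $i$ already on the branch and any $\phi$, branch $i:\phi\mid i:\lnot\phi$. (ea) from $i\,r_\phi\,j$ and any $\psi$, branch ($k:\lnot\phi$, $k:\psi$) $\mid$ ($k:\phi$, $k:\lnot\psi$) $\mid$ $i\,r_\psi\,j$, $k$ new. (R1) from $i\,r_\phi\,j$ add $j:\phi$. (R2) from $j:\psi$ and $i\,r_\phi\,j$ add $i\,r_\psi\,k$, $k$ new. (R3) from $i:\phi$, $j:\lnot\phi$, $i\,r_\top\,j$ add $j:\phi$. (R4) for any index $i$ on the branch add $i\,r_\top\,i$. (R5) from $j:\psi$ and $i\,r_\phi\,j$ add $i\,r_{\phi\land\psi}\,j$. (R6) from $j:\psi$, $i\,r_\phi\,j$, $i\,r_{\phi\land\psi}\,k$ add $k:\psi$ and $i\,r_\phi\,k$. Systems: $\mathbf{Ck}$ = basic rules; $\mathbf{CK}$ = basic rules + cut + ea; $\mathbf{Vc}$ = basic rules + R1–R6. *)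

theory Defs
  imports Main
begin

datatype 'a form =
    Var 'a
  | Bot
  | Neg "'a form"
  | Imp "'a form" "'a form"
  | Conj "'a form" "'a form"
  | Disj "'a form" "'a form"
  | Box "'a form" "'a form"   (* [phi]psi *)
  | Dia "'a form" "'a form"   (* <phi>psi *)

definition Top :: "'a form" where "Top = Neg Bot"

record ('w, 'a) smodel =
  W  :: "'w set"
  Pr :: "'w set set"
  Rl :: "'w set \<Rightarrow> ('w \<times> 'w) set"
  Vl :: "'a \<Rightarrow> 'w set"

definition Rimg :: "('w, 'a) smodel \<Rightarrow> 'w set \<Rightarrow> 'w \<Rightarrow> 'w set" where
  "Rimg M S x = {y. (x, y) \<in> Rl M S}"

definition segerberg_model :: "('w, 'a) smodel \<Rightarrow> bool" where
  "segerberg_model M \<longleftrightarrow>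
     W M \<noteq> {} \<and>
     Pr M \<subseteq> Pow (W M) \<and>
     (\<forall>S\<in>Pr M. Rl M S \<subseteq> W M \<times> W M) \<and>
     (\<forall>p. Vl M p \<in> Pr M) \<and>
     {} \<in> Pr M \<and> W M \<in> Pr M \<and>
     (\<forall>S\<in>Pr M. W M - S \<in> Pr M) \<and>
     (\<forall>S\<in>Pr M. \<forall>T\<in>Pr M. S \<inter> T \<in> Pr M) \<and>
     (\<forall>S\<in>Pr M. \<forall>T\<in>Pr M. S \<union> T \<in> Pr M) \<and>
     (\<forall>S\<in>Pr M. \<forall>T\<in>Pr M. {x \<in> W M. Rimg M S x \<subseteq> T} \<in> Pr M)"

definition VC_model :: "('w, 'a) smodel \<Rightarrow> bool" where
  "VC_model M \<longleftrightarrow> segerberg_model M \<and>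
     (\<forall>S\<in>Pr M. \<forall>T\<in>Pr M. \<forall>x\<in>W M.
        Rimg M S x \<subseteq> S \<and>
        (Rimg M S x \<inter> T \<noteq> {} \<longrightarrow> Rimg M T x \<noteq> {}) \<and>
        Rimg M (W M) x \<subseteq> {x} \<and>
        x \<in> Rimg M (W M) x \<and>
        Rimg M S x \<inter> T \<subseteq> Rimg M (S \<inter> T) x \<and>
        (Rimg M S x \<inter> T \<noteq> {} \<longrightarrow> Rimg M (S \<inter> T) x \<subseteq> Rimg M S x \<inter> T))"

primrec sat :: "('w, 'a) smodel \<Rightarrow> 'w \<Rightarrow> 'a form \<Rightarrow> bool" where
  "sat M x (Var p) = (x \<in> Vl M p)"
| "sat M x Bot = False"
| "sat M x (Neg f) = (\<not> sat M x f)"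
| "sat M x (Imp f g) = (sat M x f \<longrightarrow> sat M x g)"
| "sat M x (Conj f g) = (sat M x f \<and> sat M x g)"
| "sat M x (Disj f g) = (sat M x f \<or> sat M x g)"
| "sat M x (Box f g) = (\<forall>y. (x, y) \<in> Rl M {z \<in> W M. sat M z f} \<longrightarrow> sat M y g)"
| "sat M x (Dia f g) = (\<exists>y. (x, y) \<in> Rl M {z \<in> W M. sat M z f} \<and> sat M y g)"

definition satisfiable_in :: "('w, 'a) smodel \<Rightarrow> 'a form set \<Rightarrow> bool" where
  "satisfiable_in M \<Gamma> \<longleftrightarrow> (\<exists>x\<in>W M. \<forall>f\<in>\<Gamma>. sat M x f)"

text \<open>Prefixed formulas: Lab i phi is i:phi, Rel i phi j is i r_phi j. Indices are
positive naturals.\<close>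
datatype 'a pform = Lab nat "'a form" | Rel nat "'a form" nat

fun pidx :: "'a pform \<Rightarrow> nat set" where
  "pidx (Lab i f) = {i}"
| "pidx (Rel i f j) = {i, j}"

definition idx :: "'a pform list \<Rightarrow> nat set" where
  "idx b = (\<Union>p\<in>set b. pidx p)"

definition new :: "nat \<Rightarrow> 'a pform list \<Rightarrow> bool" where
  "new j b \<longleftrightarrow> 0 < j \<and> j \<notin> idx b"

datatype system = Ck | CK | Vc

text \<open>rule_app s b alts: some branch extension rule of system s is applicable to
prefixed formulas on branch b, yielding the list of alternatives alts (one alternative
for non-branching rules); each alternative is the list of its conclusions.\<close>
inductive rule_app :: "system \<Rightarrow> 'a pform list \<Rightarrow> 'a pform list list \<Rightarrow> bool" where
  conj: "Lab i (Conj f g) \<in> set b \<Longrightarrow> rule_app s b [[Lab i f, Lab i g]]"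
| nconj: "Lab i (Neg (Conj f g)) \<in> set b \<Longrightarrow> rule_app s b [[Lab i (Neg f)], [Lab i (Neg g)]]"
| disj: "Lab i (Disj f g) \<in> set b \<Longrightarrow> rule_app s b [[Lab i f], [Lab i g]]"
| ndisj: "Lab i (Neg (Disj f g)) \<in> set b \<Longrightarrow> rule_app s b [[Lab i (Neg f), Lab i (Neg g)]]"
| imp: "Lab i (Imp f g) \<in> set b \<Longrightarrow> rule_app s b [[Lab i (Neg f)], [Lab i g]]"
| nimp: "Lab i (Neg (Imp f g)) \<in> set b \<Longrightarrow> rule_app s b [[Lab i f, Lab i (Neg g)]]"
| nneg: "Lab i (Neg (Neg f)) \<in> set b \<Longrightarrow> rule_app s b [[Lab i f]]"
| box: "Lab i (Box f g) \<in> set b \<Longrightarrow> Rel i f j \<in> set b \<Longrightarrow> rule_app s b [[Lab j g]]"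
| nbox: "Lab i (Neg (Box f g)) \<in> set b \<Longrightarrow> new j b \<Longrightarrow>
          rule_app s b [[Rel i f j, Lab j (Neg g)]]"
| dia: "Lab i (Dia f g) \<in> set b \<Longrightarrow> new j b \<Longrightarrow>
          rule_app s b [[Rel i f j, Lab j g]]"
| ndia: "Lab i (Neg (Dia f g)) \<in> set b \<Longrightarrow> Rel i f j \<in> set b \<Longrightarrow>
          rule_app s b [[Lab j (Neg g)]]"
| cut: "i \<in> idx b \<Longrightarrow> rule_app CK b [[Lab i f], [Lab i (Neg f)]]"
| ea: "Rel i f j \<in> set b \<Longrightarrow> new k b \<Longrightarrow>
          rule_app CK b [[Lab k (Neg f), Lab k g], [Lab k f, Lab k (Neg g)], [Rel i g j]]"
| R1: "Rel i f j \<in> set b \<Longrightarrow> rule_app Vc b [[Lab j f]]"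
| R2: "Lab j g \<in> set b \<Longrightarrow> Rel i f j \<in> set b \<Longrightarrow> new k b \<Longrightarrow>
          rule_app Vc b [[Rel i g k]]"
| R3: "Lab i f \<in> set b \<Longrightarrow> Lab j (Neg f) \<in> set b \<Longrightarrow> Rel i Top j \<in> set b \<Longrightarrow>
          rule_app Vc b [[Lab j f]]"
| R4: "i \<in> idx b \<Longrightarrow> rule_app Vc b [[Rel i Top i]]"
| R5: "Lab j g \<in> set b \<Longrightarrow> Rel i f j \<in> set b \<Longrightarrow>
          rule_app Vc b [[Rel i (Conj f g) j]]"
| R6: "Lab j g \<in> set b \<Longrightarrow> Rel i f j \<in> set b \<Longrightarrow> Rel i (Conj f g) k \<in> set b \<Longrightarrow>
          rule_app Vc b [[Lab k g, Rel i f k]]"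

text \<open>A tableau is represented by the list of its branches (each branch listed from the
root downwards).\<close>
inductive tableau :: "system \<Rightarrow> 'a pform set \<Rightarrow> 'a pform list list \<Rightarrow> bool"
  for s :: system and A :: "'a pform set" where
  empty: "tableau s A [[]]"
| assm: "tableau s A (bs1 @ b # bs2) \<Longrightarrow> p \<in> A \<Longrightarrow>
           tableau s A (bs1 @ (b @ [p]) # bs2)"
| rule: "tableau s A (bs1 @ b # bs2) \<Longrightarrow> rule_app s b alts \<Longrightarrow>
           tableau s A (bs1 @ map (\<lambda>c. b @ c) alts @ bs2)"

definition closed_branch :: "'a pform list \<Rightarrow> bool" where
  "closed_branch b \<longleftrightarrow>
     (\<exists>i f. Lab i f \<in> set b \<and> Lab i (Neg f) \<in> set b) \<or> (\<exists>i. Lab i Bot \<in> set b)"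

definition closed_tableau :: "'a pform list list \<Rightarrow> bool" where
  "closed_tableau T \<longleftrightarrow> (\<forall>b\<in>set T. closed_branch b)"

end

theory Submission
  imports Defs
begin

fun holds :: "('w, 'a) smodel \<Rightarrow> (nat \<Rightarrow> 'w) \<Rightarrow> 'a pform \<Rightarrow> bool" where
  "holds M g (Lab i f) = sat M (g i) f"
| "holds M g (Rel i f j) = ((g i, g j) \<in> Rl M {z \<in> W M. sat M z f})"

definition sat_branch :: "('w, 'a) smodel \<Rightarrow> (nat \<Rightarrow> 'w) \<Rightarrow> 'a pform list \<Rightarrow> bool" where
  "sat_branch M g b \<longleftrightarrow> (\<forall>i. g i \<in> W M) \<and> (\<forall>p\<in>set b. holds M g p)"

lemma truth_set:
  assumes seg: "segerberg_model M"
  shows "{z \<in> W M. sat M z f} \<in> Pr M"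
proof (induction f)
  case (Var p)
  have "Vl M p \<in> Pr M" "Pr M \<subseteq> Pow (W M)" using seg by (auto simp: segerberg_model_def)
  then have "{z \<in> W M. sat M z (Var p)} = Vl M p" by auto
  then show ?case using \<open>Vl M p \<in> Pr M\<close> by simp
next
  case Bot then show ?case using seg by (simp add: segerberg_model_def)
next
  case (Neg f)
  have "{z \<in> W M. sat M z (Neg f)} = W M - {z \<in> W M. sat M z f}" by auto
  then show ?case using Neg seg by (simp add: segerberg_model_def)
next
  case (Imp f g)
  have "{z \<in> W M. sat M z (Imp f g)} = (W M - {z \<in> W M. sat M z f}) \<union> {z \<in> W M. sat M z g}" by auto
  then show ?case using Imp seg by (simp add: segerberg_model_def)
next
  case (Conj f g)
  have "{z \<in> W M. sat M z (Conj f g)} = {z \<in> W M. sat M z f} \<inter> {z \<in> W M. sat M z g}" by auto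
  then show ?case using Conj seg by (simp add: segerberg_model_def)
next
  case (Disj f g)
  have "{z \<in> W M. sat M z (Disj f g)} = {z \<in> W M. sat M z f} \<union> {z \<in> W M. sat M z g}" by auto
  then show ?case using Disj seg by (simp add: segerberg_model_def)
next
  case (Box f g)
  have "{z \<in> W M. sat M z (Box f g)} = {x \<in> W M. Rimg M {z \<in> W M. sat M z f} x \<subseteq> {z \<in> W M. sat M z g}}"
  proof -
    have "Rl M {z \<in> W M. sat M z f} \<subseteq> W M \<times> W M" using Box seg by (simp add: segerberg_model_def)
    then show ?thesis by (auto simp: Rimg_def)
  qed
  then show ?case using Box seg by (simp add: segerberg_model_def)
next
  case (Dia f g)
  have "Rl M {z \<in> W M. sat M z f} \<subseteq> W M \<times> W M" using Dia seg by (simp add: segerberg_model_def)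
  then have "{z \<in> W M. sat M z (Dia f g)} = W M - {x \<in> W M. Rimg M {z \<in> W M. sat M z f} x \<subseteq> W M - {z \<in> W M. sat M z g}}"
    by (auto simp: Rimg_def)
  moreover have "W M - {z \<in> W M. sat M z g} \<in> Pr M" using Dia seg by (simp add: segerberg_model_def)
  ultimately show ?case using Dia seg by (simp add: segerberg_model_def)
qed

lemma Rl_W: "segerberg_model M \<Longrightarrow> (x, y) \<in> Rl M {z \<in> W M. sat M z f} \<Longrightarrow> y \<in> W M \<and> x \<in> W M"
  using truth_set[of M f] by (auto simp: segerberg_model_def)

lemma holds_cong: "(\<forall>i\<in>pidx p. g' i = g i) \<Longrightarrow> holds M g' p = holds M g p"
  by (cases p) auto

lemma sat_branch_upd:
  assumes "sat_branch M g b" "j \<notin> idx b" "y \<in> W M"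
  shows "sat_branch M (g(j := y)) b"
proof -
  have "\<forall>p\<in>set b. holds M (g(j := y)) p = holds M g p"
    using assms(2) by (intro ballI holds_cong) (auto simp: idx_def)
  then show ?thesis using assms by (auto simp: sat_branch_def)
qed

lemma idx_upd: "j \<notin> idx b \<Longrightarrow> \<forall>i\<in>idx b. (g(j := y)) i = g i" by auto

lemma mem_idx: "p \<in> set b \<Longrightarrow> pidx p \<subseteq> idx b" by (auto simp: idx_def)

lemma top_set: "{z \<in> W M. sat M z Top} = W M" by (auto simp: Top_def)

lemma conj_set: "{z \<in> W M. sat M z (Conj f g)} = {z \<in> W M. sat M z f} \<inter> {z \<in> W M. sat M z g}" by auto

lemma keep2: "sat_branch M g b \<Longrightarrow> \<exists>c\<in>set alts. \<forall>p\<in>set c. holds M g p \<Longrightarrow>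
  \<exists>c\<in>set alts. \<exists>g'. sat_branch M g' (b @ c) \<and> (\<forall>i\<in>idx b. g' i = g i)"
proof -
  assume a: "sat_branch M g b" "\<exists>c\<in>set alts. \<forall>p\<in>set c. holds M g p"
  then obtain c where "c \<in> set alts" "\<forall>p\<in>set c. holds M g p" by blast
  then show ?thesis using a(1) by (intro bexI[of _ c] exI[of _ g]) (auto simp: sat_branch_def)
qed

lemma ext: "sat_branch M g' b \<Longrightarrow> (\<forall>i\<in>idx b. g' i = g i) \<Longrightarrow> c \<in> set alts \<Longrightarrow>
  \<forall>p\<in>set c. holds M g' p \<Longrightarrow>
  \<exists>c\<in>set alts. \<exists>g'. sat_branch M g' (b @ c) \<and> (\<forall>i\<in>idx b. g' i = g i)"
  by (intro bexI[of _ c] exI[of _ g']) (auto simp: sat_branch_def)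

lemma hb: "sat_branch M g b \<Longrightarrow> p \<in> set b \<Longrightarrow> holds M g p"
  by (simp add: sat_branch_def)

lemma keep1: "sat_branch M g b \<Longrightarrow> c \<in> set alts \<Longrightarrow> \<forall>p\<in>set c. holds M g p \<Longrightarrow>
  \<exists>c\<in>set alts. \<exists>g'. sat_branch M g' (b @ c) \<and> (\<forall>i\<in>idx b. g' i = g i)"
  by (rule ext) auto

lemma vc_all:
  assumes a: "VC_model M" "S \<in> Pr M" "T \<in> Pr M" "x \<in> W M"
  shows "Rimg M S x \<subseteq> S \<and>
        (Rimg M S x \<inter> T \<noteq> {} \<longrightarrow> Rimg M T x \<noteq> {}) \<and>
        Rimg M (W M) x \<subseteq> {x} \<and>
        x \<in> Rimg M (W M) x \<and>
        Rimg M S x \<inter> T \<subseteq> Rimg M (S \<inter> T) x \<and>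
        (Rimg M S x \<inter> T \<noteq> {} \<longrightarrow> Rimg M (S \<inter> T) x \<subseteq> Rimg M S x \<inter> T)"
proof -
  note h = conjunct2[OF a(1)[unfolded VC_model_def]]
  show ?thesis using bspec[OF bspec[OF bspec[OF h a(2)] a(3)] a(4)] .
qed

lemma step:
  assumes seg: "segerberg_model M" and vc: "s = Vc \<Longrightarrow> VC_model M"
    and ra: "rule_app s b alts" and sb: "sat_branch M g b"
  shows "\<exists>c\<in>set alts. \<exists>g'. sat_branch M g' (b @ c) \<and> (\<forall>i\<in>idx b. g' i = g i)"
  using ra
proof cases
  case (conj i f h) show ?thesis by (intro keep2[OF sb]) (use sb conj in \<open>auto simp: sat_branch_def\<close>)
next
  case (nconj i f h)
  have "holds M g (Lab i (Neg (Conj f h)))" using sb nconj(2) unfolding sat_branch_def by blast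
  then have "\<not> sat M (g i) f \<or> \<not> sat M (g i) h" by simp
  then show ?thesis
  proof
    assume "\<not> sat M (g i) f"
    then show ?thesis by (intro keep2[OF sb] bexI[of _ "[Lab i (Neg f)]"]) (simp_all add: nconj(1))
  next
    assume "\<not> sat M (g i) h"
    then show ?thesis by (intro keep2[OF sb] bexI[of _ "[Lab i (Neg h)]"]) (simp_all add: nconj(1))
  qed
next
  case (disj i f h) show ?thesis by (intro keep2[OF sb]) (use sb disj in \<open>auto simp: sat_branch_def\<close>)
next
  case (ndisj i f h) show ?thesis by (intro keep2[OF sb]) (use sb ndisj in \<open>auto simp: sat_branch_def\<close>)
next
  case (imp i f h) show ?thesis by (intro keep2[OF sb]) (use sb imp in \<open>auto simp: sat_branch_def\<close>)
next
  case (nimp i f h)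
  have "holds M g (Lab i (Neg (Imp f h)))" using sb nimp(2) unfolding sat_branch_def by blast
  then have "sat M (g i) f" "\<not> sat M (g i) h" by simp_all
  then show ?thesis by (intro keep2[OF sb] bexI[of _ "[Lab i f, Lab i (Neg h)]"]) (simp_all add: nimp(1))
next
  case (nneg i f) show ?thesis by (intro keep2[OF sb]) (use sb nneg in \<open>auto simp: sat_branch_def\<close>)
next
  case (box i f h j)
  have "holds M g (Lab i (Box f h))" "holds M g (Rel i f j)" using sb box by (auto simp: sat_branch_def)
  then have "holds M g (Lab j h)" by auto
  then show ?thesis by (intro keep2[OF sb]) (simp add: box)
next
  case (ndia i f h j)
  have "holds M g (Lab i (Neg (Dia f h)))" "holds M g (Rel i f j)" using sb ndia by (auto simp: sat_branch_def)
  then have "holds M g (Lab j (Neg h))" by auto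
  then show ?thesis by (intro keep2[OF sb]) (simp add: ndia)
next
  case (nbox i f h j)
  then have "sat M (g i) (Neg (Box f h))" using sb by (auto simp: sat_branch_def)
  then obtain y where y: "(g i, y) \<in> Rl M {z \<in> W M. sat M z f}" "\<not> sat M y h" by auto
  have yW: "y \<in> W M" using Rl_W[OF seg y(1)] by simp
  have ij: "i \<in> idx b" "j \<notin> idx b" using nbox by (force simp: idx_def, simp add: new_def)
  have ne: "i \<noteq> j" using ij by auto
  show ?thesis
    by (rule ext[where c="[Rel i f j, Lab j (Neg h)]", OF sat_branch_upd[OF sb ij(2) yW] idx_upd[OF ij(2), of g y]]) (simp_all add: nbox y ne)
next
  case (dia i f h j)
  then have "sat M (g i) (Dia f h)" using sb by (auto simp: sat_branch_def)
  then obtain y where y: "(g i, y) \<in> Rl M {z \<in> W M. sat M z f}" "sat M y h" by auto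
  have yW: "y \<in> W M" using Rl_W[OF seg y(1)] by simp
  have ij: "i \<in> idx b" "j \<notin> idx b" using dia by (force simp: idx_def, simp add: new_def)
  have ne: "i \<noteq> j" using ij by auto
  show ?thesis
    by (rule ext[where c="[Rel i f j, Lab j h]", OF sat_branch_upd[OF sb ij(2) yW] idx_upd[OF ij(2), of g y]]) (simp_all add: dia y ne)
next
  case (cut i f)
  show ?thesis
  proof (cases "sat M (g i) f")
    case True then show ?thesis using cut sb
      by (intro bexI[of _ "[Lab i f]"] exI[of _ g]) (auto simp: sat_branch_def)
  next
    case False then show ?thesis using cut sb
      by (intro bexI[of _ "[Lab i (Neg f)]"] exI[of _ g]) (auto simp: sat_branch_def)
  qed
next
  case (ea i f j k g0)
  have kn: "k \<notin> idx b" using ea by (auto simp: new_def)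
  show ?thesis
  proof (cases "{z \<in> W M. sat M z f} = {z \<in> W M. sat M z g0}")
    case True
    have "holds M g (Rel i f j)" using ea sb by (auto simp: sat_branch_def)
    then have "holds M g (Rel i g0 j)" using True by (simp only: holds.simps)
    then show ?thesis by (intro keep2[OF sb]) (simp add: ea)
  next
    case False
    have "\<exists>y\<in>W M. sat M y f \<noteq> sat M y g0"
    proof (rule ccontr)
      assume "\<not> (\<exists>y\<in>W M. sat M y f \<noteq> sat M y g0)"
      then have "{z \<in> W M. sat M z f} = {z \<in> W M. sat M z g0}" by (intro Collect_cong) blast
      then show False using False by simp
    qed
    then obtain y where yW: "y \<in> W M" and y: "sat M y f \<noteq> sat M y g0" by blast
    have sb': "sat_branch M (g(k := y)) b" using sat_branch_upd[OF sb kn yW] .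
    show ?thesis
    proof (cases "sat M y f")
      case True
      have h1: "sat M y f" "\<not> sat M y g0" using \<open>sat M y f\<close> \<open>sat M y f \<noteq> sat M y g0\<close> by blast+
      show ?thesis
        proof (rule ext[where c="[Lab k f, Lab k (Neg g0)]", OF sb' idx_upd[OF kn, of g y]])
        show "[Lab k f, Lab k (Neg g0)] \<in> set alts" unfolding ea(2) by (rule list.set_intros(2), rule list.set_intros(1))
        have ha: "holds M (g(k:=y)) (Lab k f)" "holds M (g(k:=y)) (Lab k (Neg g0))"
          using h1 by (simp_all only: holds.simps fun_upd_same sat.simps(3) simp_thms)
        show "\<forall>p\<in>set [Lab k f, Lab k (Neg g0)]. holds M (g(k:=y)) p"
        proof
          fix p assume "p \<in> set [Lab k f, Lab k (Neg g0)]"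
          then have "p = Lab k f \<or> p = Lab k (Neg g0)" by (simp only: list.set insert_iff empty_iff simp_thms)
          then show "holds M (g(k:=y)) p" using ha by blast
        qed
      qed
    next
      case False
      have h1: "\<not> sat M y f" "sat M y g0" using \<open>\<not> sat M y f\<close> \<open>sat M y f \<noteq> sat M y g0\<close> by blast+
      show ?thesis
        proof (rule ext[where c="[Lab k (Neg f), Lab k g0]", OF sb' idx_upd[OF kn, of g y]])
        show "[Lab k (Neg f), Lab k g0] \<in> set alts" unfolding ea(2) by (rule list.set_intros(1))
        have ha: "holds M (g(k:=y)) (Lab k (Neg f))" "holds M (g(k:=y)) (Lab k g0)"
          using h1 by (simp_all only: holds.simps fun_upd_same sat.simps(3) simp_thms)
        show "\<forall>p\<in>set [Lab k (Neg f), Lab k g0]. holds M (g(k:=y)) p"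
        proof
          fix p assume "p \<in> set [Lab k (Neg f), Lab k g0]"
          then have "p = Lab k (Neg f) \<or> p = Lab k g0" by (simp only: list.set insert_iff empty_iff simp_thms)
          then show "holds M (g(k:=y)) p" using ha by blast
        qed
      qed
    qed
  qed
next
  case (R1 i f j)
  have V: "VC_model M" using vc R1 by simp
  have gi: "g i \<in> W M" using sb by (simp add: sat_branch_def)
  have "holds M g (Rel i f j)" using hb[OF sb \<open>Rel i f j \<in> set b\<close>] .
  then have rel: "g j \<in> Rimg M {z \<in> W M. sat M z f} (g i)" by (simp add: Rimg_def)
  have "Rimg M {z \<in> W M. sat M z f} (g i) \<subseteq> {z \<in> W M. sat M z f}"
    using vc_all[OF V truth_set[OF seg, of f] truth_set[OF seg, of f] gi] by blast
  with rel have "sat M (g j) f" by blast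
  note hh = this
  show ?thesis by (rule keep1[OF sb, where c="[Lab j f]"]) (simp_all add: R1 hh)
next
  case (R2 j g0 i f k)
  have V: "VC_model M" using vc R2 by simp
  have gi: "g i \<in> W M" using sb by (simp add: sat_branch_def)
  have kn: "k \<notin> idx b" using R2 by (simp add: new_def)
  have "holds M g (Rel i f j)" using hb[OF sb \<open>Rel i f j \<in> set b\<close>] .
  moreover have "holds M g (Lab j g0)" using hb[OF sb \<open>Lab j g0 \<in> set b\<close>] .
  ultimately have "g j \<in> Rimg M {z \<in> W M. sat M z f} (g i) \<inter> {z \<in> W M. sat M z g0}"
    using gi sb by (auto simp: sat_branch_def Rimg_def)
  then have "Rimg M {z \<in> W M. sat M z g0} (g i) \<noteq> {}"
    using vc_all[OF V truth_set[OF seg, of f] truth_set[OF seg, of g0] gi] by blast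
  then obtain y where y: "(g i, y) \<in> Rl M {z \<in> W M. sat M z g0}" by (auto simp: Rimg_def)
  have yW: "y \<in> W M" using Rl_W[OF seg y] by simp
  have "i \<in> idx b" using mem_idx[OF \<open>Rel i f j \<in> set b\<close>] by simp
  then have ne: "i \<noteq> k" using kn by auto
  show ?thesis
    by (rule ext[where c="[Rel i g0 k]", OF sat_branch_upd[OF sb kn yW] idx_upd[OF kn, of g y]]) (simp_all add: R2 y ne)
next
  case (R3 i f j)
  have V: "VC_model M" using vc R3 by simp
  have gi: "g i \<in> W M" using sb by (simp add: sat_branch_def)
  have "holds M g (Rel i Top j)" using hb[OF sb \<open>Rel i Top j \<in> set b\<close>] .
  then have "g j \<in> Rimg M (W M) (g i)" by (simp add: Rimg_def top_set)
  moreover have "Rimg M (W M) (g i) \<subseteq> {g i}"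
    using vc_all[OF V truth_set[OF seg, of Top] truth_set[OF seg, of Top] gi] by blast
  ultimately have e: "g j = g i" by blast
  have "holds M g (Lab i f)" using hb[OF sb \<open>Lab i f \<in> set b\<close>] .
  moreover have "holds M g (Lab j (Neg f))" using hb[OF sb \<open>Lab j (Neg f) \<in> set b\<close>] .
  ultimately have False using e by simp
  then show ?thesis ..
next
  case (R4 i)
  have V: "VC_model M" using vc R4 by simp
  have gi: "g i \<in> W M" using sb by (simp add: sat_branch_def)
  have "g i \<in> Rimg M (W M) (g i)"
    using vc_all[OF V truth_set[OF seg, of Top] truth_set[OF seg, of Top] gi] by blast
  then have "holds M g (Rel i Top i)" by (simp add: Rimg_def top_set)
  note hh = this
  show ?thesis by (rule keep1[OF sb, where c="[Rel i Top i]"]) (simp_all add: R4 hh del: holds.simps)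
next
  case (R5 j g0 i f)
  have V: "VC_model M" using vc R5 by simp
  have gi: "g i \<in> W M" using sb by (simp add: sat_branch_def)
  have "holds M g (Rel i f j)" using hb[OF sb \<open>Rel i f j \<in> set b\<close>] .
  moreover have "holds M g (Lab j g0)" using hb[OF sb \<open>Lab j g0 \<in> set b\<close>] .
  ultimately have "g j \<in> Rimg M {z \<in> W M. sat M z f} (g i) \<inter> {z \<in> W M. sat M z g0}"
    using gi sb by (auto simp: sat_branch_def Rimg_def)
  then have "g j \<in> Rimg M ({z \<in> W M. sat M z f} \<inter> {z \<in> W M. sat M z g0}) (g i)"
    using vc_all[OF V truth_set[OF seg, of f] truth_set[OF seg, of g0] gi] by blast
  then have "holds M g (Rel i (Conj f g0) j)" unfolding holds.simps conj_set by (simp only: Rimg_def mem_Collect_eq)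
  note hh = this
  show ?thesis by (rule keep1[OF sb, where c="[Rel i (Conj f g0) j]"]) (simp_all add: R5 hh del: holds.simps)
next
  case (R6 j g0 i f k)
  have V: "VC_model M" using vc R6 by simp
  have gi: "g i \<in> W M" using sb by (simp add: sat_branch_def)
  have "holds M g (Rel i f j)" using hb[OF sb \<open>Rel i f j \<in> set b\<close>] .
  moreover have "holds M g (Lab j g0)" using hb[OF sb \<open>Lab j g0 \<in> set b\<close>] .
  ultimately have "g j \<in> Rimg M {z \<in> W M. sat M z f} (g i) \<inter> {z \<in> W M. sat M z g0}"
    using gi sb by (auto simp: sat_branch_def Rimg_def)
  then have sub: "Rimg M ({z \<in> W M. sat M z f} \<inter> {z \<in> W M. sat M z g0}) (g i) \<subseteq> Rimg M {z \<in> W M. sat M z f} (g i) \<inter> {z \<in> W M. sat M z g0}"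
    using vc_all[OF V truth_set[OF seg, of f] truth_set[OF seg, of g0] gi] by blast
  have "holds M g (Rel i (Conj f g0) k)" using hb[OF sb \<open>Rel i (Conj f g0) k \<in> set b\<close>] .
  then have "g k \<in> Rimg M ({z \<in> W M. sat M z f} \<inter> {z \<in> W M. sat M z g0}) (g i)"
    unfolding holds.simps conj_set by (simp only: Rimg_def mem_Collect_eq)
  with sub have "g k \<in> Rimg M {z \<in> W M. sat M z f} (g i) \<inter> {z \<in> W M. sat M z g0}" by blast
  then have "holds M g (Lab k g0)" "holds M g (Rel i f k)" by (simp_all add: Rimg_def)
  note hh = this
  show ?thesis by (rule keep1[OF sb, where c="[Lab k g0, Rel i f k]"]) (simp_all add: R6 hh del: holds.simps)
qed

lemma rule_app_nonempty: "rule_app s b alts \<Longrightarrow> b \<noteq> []"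
  by (induction rule: rule_app.induct) (auto simp: idx_def)

lemma inv:
  assumes T: "tableau s ((\<lambda>\<theta>. Lab 1 \<theta>) ` set \<theta>s) T"
    and seg: "segerberg_model M" and vc: "s = Vc \<Longrightarrow> VC_model M"
    and x: "x \<in> W M" "\<forall>f\<in>set \<theta>s. sat M x f"
  shows "\<exists>b\<in>set T. \<exists>g. sat_branch M g b \<and> g 1 = x \<and> (b \<noteq> [] \<longrightarrow> 1 \<in> idx b)"
  using T
proof induction
  case empty
  show ?case using x by (intro bexI[of _ "[]"] exI[of _ "\<lambda>_. x"]) (auto simp: sat_branch_def)
next
  case (assm bs1 b bs2 p)
  then obtain b' g where b': "b' \<in> set (bs1 @ b # bs2)" "sat_branch M g b'" "g 1 = x"
    "b' \<noteq> [] \<longrightarrow> 1 \<in> idx b'" by blast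
  show ?case
  proof (cases "b' \<in> set bs1 \<union> set bs2")
    case True then show ?thesis using b' by auto
  next
    case False
    then have "b' = b" using b'(1) by auto
    moreover obtain th where "p = Lab 1 th" "th \<in> set \<theta>s" using assm by auto
    ultimately show ?thesis using b' x
      by (intro bexI[of _ "b @ [p]"] exI[of _ g]) (auto simp: sat_branch_def idx_def)
  qed
next
  case (rule bs1 b bs2 alts)
  then obtain b' g where b': "b' \<in> set (bs1 @ b # bs2)" "sat_branch M g b'" "g 1 = x"
    "b' \<noteq> [] \<longrightarrow> 1 \<in> idx b'" by blast
  show ?case
  proof (cases "b' \<in> set bs1 \<union> set bs2")
    case True then show ?thesis using b' by auto
  next
    case False
    then have bb: "b' = b" using b'(1) by auto
    have ne: "b \<noteq> []" using rule_app_nonempty[OF rule(2)] .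
    obtain c g' where c: "c \<in> set alts" "sat_branch M g' (b @ c)" "\<forall>i\<in>idx b. g' i = g i"
      using step[OF seg vc rule(2)] b'(2) bb by blast
    have "1 \<in> idx b" using b'(4) bb ne by simp
    then have "g' 1 = x" "1 \<in> idx (b @ c)" using c(3) b'(3) by (auto simp: idx_def)
    then show ?thesis using c
      by (intro bexI[of _ "b @ c"] exI[of _ g']) auto
  qed
qed

lemma not_closed:
  assumes "sat_branch M g b" shows "\<not> closed_branch b"
proof
  assume "closed_branch b"
  then show False
  proof (unfold closed_branch_def, elim disjE exE conjE)
    fix i f assume "Lab i f \<in> set b" "Lab i (Neg f) \<in> set b"
    then have "holds M g (Lab i f)" "holds M g (Lab i (Neg f))" using assms by (auto simp: sat_branch_def)
    then show False by simp
  next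
    fix i assume "Lab i Bot \<in> set b"
    then have "holds M g (Lab i Bot)" using assms by (auto simp: sat_branch_def)
    then show False by simp
  qed
qed

lemma sound:
  assumes T: "tableau s ((\<lambda>\<theta>. Lab 1 \<theta>) ` set \<theta>s) T"
    and seg: "segerberg_model M" and vc: "s = Vc \<Longrightarrow> VC_model M"
    and sat: "satisfiable_in M (set \<theta>s)"
  shows "\<not> closed_tableau T"
proof -
  obtain x where "x \<in> W M" "\<forall>f\<in>set \<theta>s. sat M x f" using sat by (auto simp: satisfiable_in_def)
  from inv[OF T seg vc this] obtain b g where "b \<in> set T" "sat_branch M g b" by blast
  then show ?thesis using not_closed by (auto simp: closed_tableau_def)
qed

theorem mainTheorem8:
  fixes \<theta>s :: "'a form list"
  shows
   "((\<exists>M :: ('w, 'a) smodel. segerberg_model M \<and> satisfiable_in M (set \<theta>s)) \<longrightarrow>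
       (\<forall>s\<in>{Ck, CK}. \<forall>T. tableau s ((\<lambda>\<theta>. Lab 1 \<theta>) ` set \<theta>s) T \<longrightarrow> \<not> closed_tableau T))
    \<and>
    ((\<exists>M :: ('w, 'a) smodel. VC_model M \<and> satisfiable_in M (set \<theta>s)) \<longrightarrow>
       (\<forall>T. tableau Vc ((\<lambda>\<theta>. Lab 1 \<theta>) ` set \<theta>s) T \<longrightarrow> \<not> closed_tableau T))"
proof (intro conjI impI ballI allI)
  fix s T assume "\<exists>M :: ('w, 'a) smodel. segerberg_model M \<and> satisfiable_in M (set \<theta>s)"
    "s \<in> {Ck, CK}" "tableau s ((\<lambda>\<theta>. Lab 1 \<theta>) ` set \<theta>s) T"
  then show "\<not> closed_tableau T" using sound by blast
next
  fix T assume "\<exists>M :: ('w, 'a) smodel. VC_model M \<and> satisfiable_in M (set \<theta>s)"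
    "tableau Vc ((\<lambda>\<theta>. Lab 1 \<theta>) ` set \<theta>s) T"
  then show "\<not> closed_tableau T" using sound VC_model_def by metis
qed

end
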